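(* Let $N\in\{1,2,3,4\}$, let $\omega_1,\dots,\omega_N\in S\oplus V$ be linearly independent over $\mathbb{R}$, $L=\{\sum_{\alpha=1}^N2k_\alpha\omega_\alpha: k\in\mathbb{Z}^N\}$, $\{w_p\}_{p\ge1}$ an enumeration of $L\setminus\{0\}$, and $$\zeta_N(x)=x^{-1}+\sum_{p=1}^\infty\Big\{(x-w_p)^{-1}+\sum_{\mu=0}^{N-1}(w_p^{-1}x)^\mu w_p^{-1}\Big\},\quad x\in(S\oplus V)\setminus L.$$ Then $\zeta_N$ takes its values in $S\oplus V$, and $\zeta_N(-x)=-\zeta_N(x)$ for all $x\in(S\oplus V)\setminus L$.
   Context: $\mathbb{R}_{0,3}$ is the real Clifford algebra generated by $e_1,e_2,e_3$ with $e_ie_j+e_je_i=-2\delta_{ij}$; $e_0=1$. $S\oplus V\subset\mathbb{R}_{0,3}$ is the set of paravectors $x=x_0+\sum_{j=1}^3x_je_j$; for $x\ne0$, $x^{-1}=\bar x/|x|^2$ with $\bar x=x_0-\sum_jx_je_j$, $|x|^2=\sum x_i^2$. *)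

theory Defs
  imports Complex_Main
begin

text \<open>Elements of the real Clifford algebra R_{0,3} are represented as coefficient
functions on blades: a multivector a is a function from finite subsets A of {1,2,3}
to reals, a A being the coefficient of e_A = e_{a1} ... e_{ak} (a1 < ... < ak),
e_{} = 1. Coefficients outside Pow {1,2,3} are irrelevant (and are zero for all
multivectors constructed below).\<close>

type_synonym mv = "nat set \<Rightarrow> real"

definition mzero :: mv where "mzero = (\<lambda>_. 0)"
definition mone :: mv where "mone = (\<lambda>A. if A = {} then 1 else 0)"
definition madd :: "mv \<Rightarrow> mv \<Rightarrow> mv" where "madd a b = (\<lambda>A. a A + b A)"
definition msub :: "mv \<Rightarrow> mv \<Rightarrow> mv" where "msub a b = (\<lambda>A. a A - b A)"
definition mneg :: "mv \<Rightarrow> mv" where "mneg a = (\<lambda>A. - a A)"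

text \<open>Sign of the blade product e_A e_B = bsign A B * e_{A symdiff B},
using e_i e_j = - e_j e_i (i \<noteq> j) and e_i e_i = -1.\<close>
definition bsign :: "nat set \<Rightarrow> nat set \<Rightarrow> real" where
  "bsign A B = (-1) ^ (card {(i, j). i \<in> A \<and> j \<in> B \<and> j < i} + card (A \<inter> B))"

definition mmul :: "mv \<Rightarrow> mv \<Rightarrow> mv" where
  "mmul a b = (\<lambda>C. \<Sum>A\<in>Pow {1,2,3}. \<Sum>B\<in>Pow {1,2,3}.
      if (A - B) \<union> (B - A) = C then bsign A B * a A * b B else 0)"

primrec mpow :: "mv \<Rightarrow> nat \<Rightarrow> mv" where
  "mpow a 0 = mone"
| "mpow a (Suc n) = mmul (mpow a n) a"

definition paravector :: "mv \<Rightarrow> bool" where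
  "paravector x \<longleftrightarrow> (\<forall>A. A \<notin> {{}, {1}, {2}, {3}} \<longrightarrow> x A = 0)"

definition pconj :: "mv \<Rightarrow> mv" where
  "pconj x = (\<lambda>A. if A = {} then x A else - x A)"

definition pnormsq :: "mv \<Rightarrow> real" where
  "pnormsq x = x {} ^ 2 + x {1} ^ 2 + x {2} ^ 2 + x {3} ^ 2"

definition pinv :: "mv \<Rightarrow> mv" where
  "pinv x = (\<lambda>A. pconj x A / pnormsq x)"

definition lattice :: "nat \<Rightarrow> (nat \<Rightarrow> mv) \<Rightarrow> mv set" where
  "lattice N \<omega> = {y. \<exists>k :: nat \<Rightarrow> int. y = (\<lambda>C. \<Sum>\<alpha>\<in>{1..N}. 2 * of_int (k \<alpha>) * \<omega> \<alpha> C)}"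

definition zterm :: "nat \<Rightarrow> (nat \<Rightarrow> mv) \<Rightarrow> mv \<Rightarrow> nat \<Rightarrow> mv" where
  "zterm N w x p = (\<lambda>C. pinv (msub x (w p)) C +
      (\<Sum>\<mu><N. mmul (mpow (mmul (pinv (w p)) x) \<mu>) (pinv (w p)) C))"

definition zeta :: "nat \<Rightarrow> (nat \<Rightarrow> mv) \<Rightarrow> mv \<Rightarrow> mv" where
  "zeta N w x = (\<lambda>C. pinv x C + (\<Sum>p. zterm N w x (Suc p) C))"

end

theory Submission
  imports Defs "HOL-Analysis.Analysis"
begin

abbreviation "P3 \<equiv> Pow {1,2,3::nat}"

lemma Pow3: "Pow {1,2,3::nat} = {{},{1},{2},{3},{1,2},{1,3},{2,3},{1,2,3}}"
  by (simp add: Pow_insert insert_commute)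

definition binv :: "nat set \<Rightarrow> nat set \<Rightarrow> nat" where
  "binv A B = card {(i, j). i \<in> A \<and> j \<in> B \<and> j < i}"

lemma bsign_binv: "bsign A B = (-1) ^ (binv A B + card (A \<inter> B))"
  by (simp add: bsign_def binv_def)

lemma binv_Un_left:
  assumes "finite X" "finite Y" "finite D" "X \<inter> Y = {}"
  shows "binv (X \<union> Y) D = binv X D + binv Y D"
proof -
  have e: "{(i, j). i \<in> X \<union> Y \<and> j \<in> D \<and> j < i} =
     {(i, j). i \<in> X \<and> j \<in> D \<and> j < i} \<union> {(i, j). i \<in> Y \<and> j \<in> D \<and> j < i}" by auto
  have f1: "finite {(i, j). i \<in> X \<and> j \<in> D \<and> j < i}"
    by (rule finite_subset[of _ "X \<times> D"]) (use assms in auto)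
  have f2: "finite {(i, j). i \<in> Y \<and> j \<in> D \<and> j < i}"
    by (rule finite_subset[of _ "Y \<times> D"]) (use assms in auto)
  show ?thesis unfolding binv_def e
    by (rule card_Un_disjoint[OF f1 f2]) (use assms in auto)
qed

lemma binv_Un_right:
  assumes "finite X" "finite Y" "finite D" "X \<inter> Y = {}"
  shows "binv D (X \<union> Y) = binv D X + binv D Y"
proof -
  have e: "{(i, j). i \<in> D \<and> j \<in> X \<union> Y \<and> j < i} =
     {(i, j). i \<in> D \<and> j \<in> X \<and> j < i} \<union> {(i, j). i \<in> D \<and> j \<in> Y \<and> j < i}" by auto
  have f1: "finite {(i, j). i \<in> D \<and> j \<in> X \<and> j < i}"
    by (rule finite_subset[of _ "D \<times> X"]) (use assms in auto)
  have f2: "finite {(i, j). i \<in> D \<and> j \<in> Y \<and> j < i}"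
    by (rule finite_subset[of _ "D \<times> Y"]) (use assms in auto)
  show ?thesis unfolding binv_def e
    by (rule card_Un_disjoint[OF f1 f2]) (use assms in auto)
qed

lemma binv_sd_left:
  assumes "finite A" "finite B" "finite D"
  shows "binv (sym_diff A B) D + 2 * binv (A \<inter> B) D = binv A D + binv B D"
proof -
  have "binv A D = binv (A - B) D + binv (A \<inter> B) D"
    using binv_Un_left[of "A - B" "A \<inter> B" D] assms by (metis Diff_disjoint Int_Diff Un_Diff_Int Int_commute finite_Diff finite_Int)
  moreover have "binv B D = binv (B - A) D + binv (A \<inter> B) D"
    using binv_Un_left[of "B - A" "A \<inter> B" D] assms by (metis Diff_disjoint Int_Diff Un_Diff_Int Int_commute finite_Diff finite_Int)
  moreover have "binv (sym_diff A B) D = binv (A - B) D + binv (B - A) D"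
    using binv_Un_left[of "A - B" "B - A" D] assms by auto
  ultimately show ?thesis by simp
qed

lemma binv_sd_right:
  assumes "finite A" "finite B" "finite D"
  shows "binv D (sym_diff A B) + 2 * binv D (A \<inter> B) = binv D A + binv D B"
proof -
  have "binv D A = binv D (A - B) + binv D (A \<inter> B)"
    using binv_Un_right[of "A - B" "A \<inter> B" D] assms by (metis Diff_disjoint Int_Diff Un_Diff_Int Int_commute finite_Diff finite_Int)
  moreover have "binv D B = binv D (B - A) + binv D (A \<inter> B)"
    using binv_Un_right[of "B - A" "A \<inter> B" D] assms by (metis Diff_disjoint Int_Diff Un_Diff_Int Int_commute finite_Diff finite_Int)
  moreover have "binv D (sym_diff A B) = binv D (A - B) + binv D (B - A)"
    using binv_Un_right[of "A - B" "B - A" D] assms by auto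
  ultimately show ?thesis by simp
qed

lemma card_sd_Int:
  assumes "finite A" "finite B"
  shows "card (sym_diff A B \<inter> D) + 2 * card (A \<inter> B \<inter> D) = card (A \<inter> D) + card (B \<inter> D)"
proof -
  have "card (A \<inter> D) = card ((A - B) \<inter> D) + card (A \<inter> B \<inter> D)"
    by (subst card_Un_disjoint[symmetric]) (use assms in \<open>auto intro!: arg_cong[where f=card]\<close>)
  moreover have "card (B \<inter> D) = card ((B - A) \<inter> D) + card (A \<inter> B \<inter> D)"
    by (subst card_Un_disjoint[symmetric]) (use assms in \<open>auto intro!: arg_cong[where f=card]\<close>)
  moreover have "card (sym_diff A B \<inter> D) = card ((A - B) \<inter> D) + card ((B - A) \<inter> D)"
    by (subst card_Un_disjoint[symmetric]) (use assms in \<open>auto intro!: arg_cong[where f=card]\<close>)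
  ultimately show ?thesis by simp
qed

lemma neg1_pow_eq: "even (m + n) \<Longrightarrow> (-1::real) ^ m = (-1) ^ n"
  by (metis minus_one_power_iff odd_add)

lemma parity4:
  fixes sdF :: nat
  assumes "sdF + 2*X1 = aF + bF" "asdBF + 2*X2 = ab + aF" "csdF + 2*c3 = cAF + cBF" "csdBFA + 2*c3 = cAB + cAF"
  shows "even (ab + cAB + (sdF + csdF) + (bF + cBF + (asdBF + csdBFA)))"
proof -
  have h: "int sdF = int aF + int bF - 2 * int X1" "int asdBF = int ab + int aF - 2 * int X2"
    "int csdF = int cAF + int cBF - 2 * int c3" "int csdBFA = int cAB + int cAF - 2 * int c3"
    using assms by linarith+
  have "int (ab + cAB + (sdF + csdF) + (bF + cBF + (asdBF + csdBFA))) = 2 * (int ab + int aF + int bF + int cAB + int cAF + int cBF - int X1 - int X2 - 2 * int c3)"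
    by (simp add: h)
  then have "even (int (ab + cAB + (sdF + csdF) + (bF + cBF + (asdBF + csdBFA))))" by presburger
  then show ?thesis by (simp only: even_of_nat_iff)
qed
lemma parity3:
  fixes ss :: nat
  assumes "ss + 2*X1 = aS + bS" "aS + 2*X2 = aa + ab" "bS + 2*X3 = ba + bb"
  shows "even (ss + (ab + c) + (ba + c + aa + bb))"
proof -
  have h: "int ss = int aS + int bS - 2 * int X1" "int aS = int aa + int ab - 2 * int X2"
    "int bS = int ba + int bb - 2 * int X3"
    using assms by linarith+
  have "int (ss + (ab + c) + (ba + c + aa + bb)) = 2 * (int aa + int ab + int ba + int bb + int c - int X1 - int X2 - int X3)"
    by (simp add: h)
  then have "even (int (ss + (ab + c) + (ba + c + aa + bb)))" by presburger
  then show ?thesis by (simp only: even_of_nat_iff)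
qed


lemma cocycle:
  assumes "finite A" "finite B" "finite F"
  shows "bsign A B * bsign (sym_diff A B) F = bsign B F * bsign A (sym_diff B F)"
proof -
  have 1: "binv (sym_diff A B) F + 2 * binv (A \<inter> B) F = binv A F + binv B F"
    using binv_sd_left assms by simp
  have 2: "binv A (sym_diff B F) + 2 * binv A (B \<inter> F) = binv A B + binv A F"
    using binv_sd_right assms by simp
  have 3: "card (sym_diff A B \<inter> F) + 2 * card (A \<inter> B \<inter> F) = card (A \<inter> F) + card (B \<inter> F)"
    by (rule card_sd_Int[OF assms(1,2)])
  have 4: "card (sym_diff B F \<inter> A) + 2 * card (B \<inter> F \<inter> A) = card (B \<inter> A) + card (F \<inter> A)"
    by (rule card_sd_Int[OF assms(2,3)])
  have i: "A \<inter> sym_diff B F = sym_diff B F \<inter> A" "B \<inter> F \<inter> A = A \<inter> B \<inter> F"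
     "B \<inter> A = A \<inter> B" "F \<inter> A = A \<inter> F" by auto
  show ?thesis unfolding bsign_binv power_add[symmetric]
    apply (rule neg1_pow_eq)
    using parity4[OF 1 2 3 4[unfolded i]] unfolding i .
qed

definition rsign :: "nat set \<Rightarrow> real" where "rsign C = (-1) ^ binv C C"

lemma rev_sign:
  assumes "finite A" "finite B"
  shows "rsign (sym_diff A B) * bsign A B = bsign B A * rsign A * rsign B"
proof -
  have 1: "binv (sym_diff A B) (sym_diff A B) + 2 * binv (A \<inter> B) (sym_diff A B) = binv A (sym_diff A B) + binv B (sym_diff A B)"
    using binv_sd_left assms by simp
  have 2: "binv A (sym_diff A B) + 2 * binv A (A \<inter> B) = binv A A + binv A B"
    using binv_sd_right assms by simp
  have 3: "binv B (sym_diff A B) + 2 * binv B (A \<inter> B) = binv B A + binv B B"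
    using binv_sd_right assms by simp
  have i: "B \<inter> A = A \<inter> B" by auto
  show ?thesis unfolding bsign_binv rsign_def power_add[symmetric] i
    apply (rule neg1_pow_eq)
    using parity3[OF 1 2 3] .
qed

definition PP :: "nat set set" where "PP = Pow {1,2,3}"

lemma sd_PP: "A \<in> PP \<Longrightarrow> B \<in> PP \<Longrightarrow> sym_diff A B \<in> PP" by (auto simp: PP_def)

lemma finite_PP_el: "A \<in> PP \<Longrightarrow> finite A"
  unfolding PP_def by (rule finite_subset[of _ "{1,2,3}"]) auto

lemma finite_PP[simp]: "finite PP" by (simp add: PP_def)

lemma mmul_PP: "mmul a b C = (\<Sum>A\<in>PP. \<Sum>B\<in>PP. if sym_diff A B = C then bsign A B * a A * b B else 0)"
  by (simp add: mmul_def PP_def)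

definition supp :: "mv \<Rightarrow> bool" where "supp a \<longleftrightarrow> (\<forall>C. C \<notin> PP \<longrightarrow> a C = 0)"

lemma mmul_supp: "supp (mmul a b)"
  unfolding supp_def mmul_PP
  by (auto intro!: sum.neutral dest: sd_PP)

lemma mmul_outside: "C \<notin> PP \<Longrightarrow> mmul a b C = 0"
  using mmul_supp unfolding supp_def by blast

lemma sum2_mult_right: "(\<Sum>A\<in>S. \<Sum>B\<in>T. f A B) * (h::real) = (\<Sum>A\<in>S. \<Sum>B\<in>T. f A B * h)"
  by (simp add: sum_distrib_right)

lemma sum2_mult_left: "(h::real) * (\<Sum>A\<in>S. \<Sum>B\<in>T. f A B) = (\<Sum>A\<in>S. \<Sum>B\<in>T. h * f A B)"
  by (simp add: sum_distrib_left)

lemma collapse_left: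
  fixes t :: "nat set \<Rightarrow> nat set \<Rightarrow> real" and h :: "nat set \<Rightarrow> real"
  shows   "(\<Sum>E\<in>PP. (\<Sum>A\<in>PP. \<Sum>B\<in>PP. if sym_diff A B = E then t A B else 0) * h E)
   = (\<Sum>A\<in>PP. \<Sum>B\<in>PP. t A B * h (sym_diff A B))"
proof -
  have "(\<Sum>E\<in>PP. (\<Sum>A\<in>PP. \<Sum>B\<in>PP. if sym_diff A B = E then t A B else 0) * h E)
     = (\<Sum>E\<in>PP. \<Sum>A\<in>PP. \<Sum>B\<in>PP. if sym_diff A B = E then t A B * h E else 0)"
    unfolding sum2_mult_right by (intro sum.cong refl) simp
  also have "\<dots> = (\<Sum>A\<in>PP. \<Sum>B\<in>PP. \<Sum>E\<in>PP. if sym_diff A B = E then t A B * h E else 0)"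
    by (subst sum.swap) (rule sum.cong[OF refl], rule sum.swap)
  also have "\<dots> = (\<Sum>A\<in>PP. \<Sum>B\<in>PP. t A B * h (sym_diff A B))"
    by (intro sum.cong[OF refl]) (simp add: sum.delta' sd_PP)
  finally show ?thesis .
qed

lemma collapse_right:
  fixes t :: "nat set \<Rightarrow> nat set \<Rightarrow> real" and h :: "nat set \<Rightarrow> real"
  shows   "(\<Sum>E\<in>PP. h E * (\<Sum>A\<in>PP. \<Sum>B\<in>PP. if sym_diff A B = E then t A B else 0))
   = (\<Sum>A\<in>PP. \<Sum>B\<in>PP. h (sym_diff A B) * t A B)"
proof -
  have "(\<Sum>E\<in>PP. h E * (\<Sum>A\<in>PP. \<Sum>B\<in>PP. if sym_diff A B = E then t A B else 0))
     = (\<Sum>E\<in>PP. \<Sum>A\<in>PP. \<Sum>B\<in>PP. if sym_diff A B = E then h E * t A B else 0)"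
    unfolding sum2_mult_left by (intro sum.cong refl) simp
  also have "\<dots> = (\<Sum>A\<in>PP. \<Sum>B\<in>PP. \<Sum>E\<in>PP. if sym_diff A B = E then h E * t A B else 0)"
    by (subst sum.swap) (rule sum.cong[OF refl], rule sum.swap)
  also have "\<dots> = (\<Sum>A\<in>PP. \<Sum>B\<in>PP. h (sym_diff A B) * t A B)"
    by (intro sum.cong[OF refl]) (simp add: sum.delta' sd_PP)
  finally show ?thesis .
qed

lemma mmul_assoc: "mmul (mmul a b) c = mmul a (mmul b c)"
proof
  fix D
  have "mmul (mmul a b) c D = (\<Sum>E\<in>PP. mmul a b E * (\<Sum>F\<in>PP. if sym_diff E F = D then bsign E F * c F else 0))"
    unfolding mmul_PP[of "mmul a b" c] sum_distrib_left by (intro sum.cong refl) (simp add: mult_ac)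
  also have "\<dots> = (\<Sum>A\<in>PP. \<Sum>B\<in>PP. (bsign A B * a A * b B) * (\<Sum>F\<in>PP. if sym_diff (sym_diff A B) F = D then bsign (sym_diff A B) F * c F else 0))"
    unfolding mmul_PP[of a b] by (rule collapse_left)
  also have "\<dots> = (\<Sum>A\<in>PP. \<Sum>B\<in>PP. \<Sum>F\<in>PP. if sym_diff A (sym_diff B F) = D then bsign A (sym_diff B F) * a A * (bsign B F * b B * c F) else 0)"
  proof (intro sum.cong[OF refl])
    fix A B assume AB: "A \<in> PP" "B \<in> PP"
    show "bsign A B * a A * b B * (\<Sum>F\<in>PP. if sym_diff (sym_diff A B) F = D then bsign (sym_diff A B) F * c F else 0)
       = (\<Sum>F\<in>PP. if sym_diff A (sym_diff B F) = D then bsign A (sym_diff B F) * a A * (bsign B F * b B * c F) else 0)"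
      unfolding sum_distrib_left
    proof (intro sum.cong[OF refl])
      fix F assume F: "F \<in> PP"
      have co: "bsign A B * bsign (sym_diff A B) F = bsign B F * bsign A (sym_diff B F)"
        using cocycle[OF finite_PP_el[OF AB(1)] finite_PP_el[OF AB(2)] finite_PP_el[OF F]] .
      have sd: "sym_diff (sym_diff A B) F = sym_diff A (sym_diff B F)" by auto
      have "bsign A B * a A * b B * (bsign (sym_diff A B) F * c F) = (bsign A B * bsign (sym_diff A B) F) * a A * b B * c F"
        by (simp add: mult_ac)
      also have "\<dots> = bsign A (sym_diff B F) * a A * (bsign B F * b B * c F)"
        unfolding co by (simp add: mult_ac)
      finally show "bsign A B * a A * b B * (if sym_diff (sym_diff A B) F = D then bsign (sym_diff A B) F * c F else 0)
         = (if sym_diff A (sym_diff B F) = D then bsign A (sym_diff B F) * a A * (bsign B F * b B * c F) else 0)"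
        unfolding sd by simp
    qed
  qed
  also have "\<dots> = (\<Sum>A\<in>PP. \<Sum>G\<in>PP. (if sym_diff A G = D then bsign A G * a A else 0) * mmul b c G)"
  proof (rule sum.cong[OF refl])
    fix A assume "A \<in> PP"
    have "(\<Sum>G\<in>PP. (if sym_diff A G = D then bsign A G * a A else 0) * mmul b c G)
      = (\<Sum>B\<in>PP. \<Sum>F\<in>PP. (if sym_diff A (sym_diff B F) = D then bsign A (sym_diff B F) * a A else 0) * (bsign B F * b B * c F))"
      unfolding mmul_PP[of b c] by (rule collapse_right)
    moreover have "(\<Sum>B\<in>PP. \<Sum>F\<in>PP. if sym_diff A (sym_diff B F) = D then bsign A (sym_diff B F) * a A * (bsign B F * b B * c F) else 0)
      = (\<Sum>B\<in>PP. \<Sum>F\<in>PP. (if sym_diff A (sym_diff B F) = D then bsign A (sym_diff B F) * a A else 0) * (bsign B F * b B * c F))"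
      by (intro sum.cong refl) simp
    ultimately show "(\<Sum>B\<in>PP. \<Sum>F\<in>PP. if sym_diff A (sym_diff B F) = D then bsign A (sym_diff B F) * a A * (bsign B F * b B * c F) else 0)
      = (\<Sum>G\<in>PP. (if sym_diff A G = D then bsign A G * a A else 0) * mmul b c G)"
      by metis
  qed
  also have "\<dots> = mmul a (mmul b c) D"
    unfolding mmul_PP[of a "mmul b c"] by (intro sum.cong refl) (simp add: mult.assoc)
  finally show "mmul (mmul a b) c D = mmul a (mmul b c) D" .
qed

lemma bsign_empty_left[simp]: "bsign {} B = 1"
  by (simp add: bsign_def)
lemma bsign_empty_right[simp]: "bsign A {} = 1"
  by (simp add: bsign_def)

lemma bsign_single: "bsign {i} {j} = (if i = j then -1 else if j < i then -1 else 1)"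
proof -
  have "{(i', j'). i' \<in> {i} \<and> j' \<in> {j} \<and> j' < i'} = (if j < i then {(i,j)} else {})" by auto
  then show ?thesis by (auto simp: bsign_def)
qed

lemma mmul_lin_left: "mmul (\<lambda>C. r * a C + s * b C) c = (\<lambda>C. r * mmul a c C + s * mmul b c C)"
proof (rule ext)
  fix C
  show "mmul (\<lambda>C. r * a C + s * b C) c C = r * mmul a c C + s * mmul b c C"
    unfolding mmul_PP sum_distrib_left sum.distrib[symmetric]
    by (intro sum.cong refl) (simp add: algebra_simps)
qed

lemma mmul_lin_right: "mmul c (\<lambda>C. r * a C + s * b C) = (\<lambda>C. r * mmul c a C + s * mmul c b C)"
proof (rule ext)
  fix C
  show "mmul c (\<lambda>C. r * a C + s * b C) C = r * mmul c a C + s * mmul c b C"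
    unfolding mmul_PP sum_distrib_left sum.distrib[symmetric]
    by (intro sum.cong refl) (simp add: algebra_simps)
qed

lemma mmul_add_left: "mmul (madd a b) c = madd (mmul a c) (mmul b c)"
  using mmul_lin_left[where r="1" and a=a and s="1" and b=b and c=c] by (simp add: madd_def)
lemma mmul_add_right: "mmul c (madd a b) = madd (mmul c a) (mmul c b)"
  using mmul_lin_right[where r="1" and a=a and s="1" and b=b and c=c] by (simp add: madd_def)
lemma mmul_sub_left: "mmul (msub a b) c = msub (mmul a c) (mmul b c)"
  using mmul_lin_left[where r="1" and a=a and s="-1" and b=b and c=c] by (simp add: msub_def)
lemma mmul_sub_right: "mmul c (msub a b) = msub (mmul c a) (mmul c b)"
  using mmul_lin_right[where r="1" and a=a and s="-1" and b=b and c=c] by (simp add: msub_def)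
lemma mmul_neg_left: "mmul (mneg a) c = mneg (mmul a c)"
  using mmul_lin_left[where r="-1" and a=a and s="0" and b=a and c=c] by (simp add: mneg_def)
lemma mmul_neg_right: "mmul c (mneg a) = mneg (mmul c a)"
  using mmul_lin_right[where r="-1" and a=a and s="0" and b=a and c=c] by (simp add: mneg_def)
lemma mmul_zero_left: "mmul mzero c = mzero"
  using mmul_lin_left[where r="0" and a=c and s="0" and b=c and c=c] by (simp add: mzero_def)
lemma mmul_zero_right: "mmul c mzero = mzero"
  using mmul_lin_right[where r="0" and a=c and s="0" and b=c and c=c] by (simp add: mzero_def)

lemma mmul_sum_left: "finite I \<Longrightarrow> mmul (\<lambda>C. \<Sum>i\<in>I. f i C) c = (\<lambda>C. \<Sum>i\<in>I. mmul (f i) c C)"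
proof (induction I rule: finite_induct)
  case empty
  then show ?case using mmul_zero_left by (simp add: mzero_def)
next
  case (insert x F)
  have "mmul (\<lambda>C. \<Sum>i\<in>insert x F. f i C) c = mmul (\<lambda>C. 1 * f x C + 1 * (\<Sum>i\<in>F. f i C)) c"
    using insert by simp
  also have "\<dots> = (\<lambda>C. mmul (f x) c C + (\<Sum>i\<in>F. mmul (f i) c C))"
    unfolding mmul_lin_left insert.IH by simp
  finally show ?case using insert by simp
qed

lemma mmul_sum_right: "finite I \<Longrightarrow> mmul c (\<lambda>C. \<Sum>i\<in>I. f i C) = (\<lambda>C. \<Sum>i\<in>I. mmul c (f i) C)"
proof (induction I rule: finite_induct)
  case empty
  then show ?case using mmul_zero_right by (simp add: mzero_def)
next
  case (insert x F)
  have "mmul c (\<lambda>C. \<Sum>i\<in>insert x F. f i C) = mmul c (\<lambda>C. 1 * f x C + 1 * (\<Sum>i\<in>F. f i C))"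
    using insert by simp
  also have "\<dots> = (\<lambda>C. mmul c (f x) C + (\<Sum>i\<in>F. mmul c (f i) C))"
    unfolding mmul_lin_right insert.IH by simp
  finally show ?case using insert by simp
qed

lemma mone_supp: "supp mone" by (simp add: supp_def mone_def PP_def)

lemma empty_PP: "{} \<in> PP" by (simp add: PP_def)

lemma mone_apply: "mone A = (if A = {} then 1 else 0)" by (simp add: mone_def)

lemma mmul_one_left: "supp a \<Longrightarrow> mmul mone a = a"
proof (rule ext)
  fix C assume s: "supp a"
  have "mmul mone a C = (\<Sum>A\<in>PP. if A = {} then (\<Sum>B\<in>PP. if B = C then a B else 0) else 0)"
    unfolding mmul_PP by (rule sum.cong[OF refl]) (simp add: mone_apply cong: if_cong)
  also have "\<dots> = (\<Sum>B\<in>PP. if B = C then a B else 0)"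
    by (simp add: sum.delta empty_PP)
  also have "\<dots> = a C" using s by (simp add: supp_def)
  finally show "mmul mone a C = a C" .
qed

lemma mmul_one_right: "supp a \<Longrightarrow> mmul a mone = a"
proof (rule ext)
  fix C assume s: "supp a"
  have "mmul a mone C = (\<Sum>A\<in>PP. \<Sum>B\<in>PP. if B = {} then (if A = C then a A else 0) else 0)"
    unfolding mmul_PP by (intro sum.cong refl) (auto simp: mone_def)
  also have "\<dots> = (\<Sum>A\<in>PP. if A = C then a A else 0)"
    by (intro sum.cong refl) (simp add: sum.delta empty_PP)
  also have "\<dots> = a C" using s by (simp add: supp_def)
  finally show "mmul a mone C = a C" .
qed

definition QQ :: "nat set set" where "QQ = {{},{1},{2},{3}}"

lemma QQ_PP: "QQ \<subseteq> PP" by (auto simp: QQ_def PP_def)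

lemma para_supp: "paravector a \<Longrightarrow> supp a"
  unfolding paravector_def supp_def PP_def by auto

lemma sum_PP_QQ: "(\<And>A. A \<in> PP \<Longrightarrow> A \<notin> QQ \<Longrightarrow> g A = 0) \<Longrightarrow> (\<Sum>A\<in>PP. g A) = (\<Sum>A\<in>QQ. g A)"
  by (rule sum.mono_neutral_right) (use QQ_PP in \<open>auto simp: QQ_def\<close>)

lemma sum_QQ: "(\<Sum>A\<in>QQ. g A) = g {} + g {1} + g {2} + g {3}"
  by (simp add: QQ_def add_ac)

lemma para_zero: "paravector a \<Longrightarrow> A \<notin> QQ \<Longrightarrow> a A = 0"
  unfolding paravector_def QQ_def by blast

lemma set_neqs: "{} \<noteq> ({1}::nat set)" "{} \<noteq> ({2}::nat set)" "{} \<noteq> ({3}::nat set)" "{} \<noteq> ({1,2}::nat set)" "{} \<noteq> ({1,3}::nat set)" "{} \<noteq> ({2,3}::nat set)" "{1} \<noteq> ({}::nat set)" "{1} \<noteq> ({2}::nat set)" "{1} \<noteq> ({3}::nat set)" "{1} \<noteq> ({1,2}::nat set)" "{1} \<noteq> ({1,3}::nat set)" "{1} \<noteq> ({2,3}::nat set)" "{2} \<noteq> ({}::nat set)" "{2} \<noteq> ({1}::nat set)" "{2} \<noteq> ({3}::nat set)" "{2} \<noteq> ({1,2}::nat set)" "{2} \<noteq> ({1,3}::nat set)" "{2} \<noteq> ({2,3}::nat set)" "{3} \<noteq> ({}::nat set)" "{3} \<noteq> ({1}::nat set)" "{3} \<noteq> ({2}::nat set)" "{3} \<noteq> ({1,2}::nat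 set)" "{3} \<noteq> ({1,3}::nat set)" "{3} \<noteq> ({2,3}::nat set)" "{1,2} \<noteq> ({}::nat set)" "{1,2} \<noteq> ({1}::nat set)" "{1,2} \<noteq> ({2}::nat set)" "{1,2} \<noteq> ({3}::nat set)" "{1,2} \<noteq> ({1,3}::nat set)" "{1,2} \<noteq> ({2,3}::nat set)" "{1,3} \<noteq> ({}::nat set)" "{1,3} \<noteq> ({1}::nat set)" "{1,3} \<noteq> ({2}::nat set)" "{1,3} \<noteq> ({3}::nat set)" "{1,3} \<noteq> ({1,2}::nat set)" "{1,3} \<noteq> ({2,3}::nat set)" "{2,3} \<noteq> ({}::nat set)" "{2,3} \<noteq> ({1}::nat set)" "{2,3} \<noteq> ({2}::nat set)" "{2,3} \<noteq> ({3}::nat set)" "{2,3} \<noteq> ({1,2}::nat set)" "{2,3} \<noteq> ({1,3}::nat set)"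
  by auto

lemma sd_table: "sym_diff {} {} = ({}::nat set)" "sym_diff {} {1} = ({1}::nat set)" "sym_diff {} {2} = ({2}::nat set)" "sym_diff {} {3} = ({3}::nat set)" "sym_diff {1} {} = ({1}::nat set)" "sym_diff {1} {1} = ({}::nat set)" "sym_diff {1} {2} = ({1,2}::nat set)" "sym_diff {1} {3} = ({1,3}::nat set)" "sym_diff {2} {} = ({2}::nat set)" "sym_diff {2} {1} = ({1,2}::nat set)" "sym_diff {2} {2} = ({}::nat set)" "sym_diff {2} {3} = ({2,3}::nat set)" "sym_diff {3} {} = ({3}::nat set)" "sym_diff {3} {1} = ({1,3}::nat set)" "sym_diff {3} {2} = ({2,3}::nat set)" "sym_diff {3} {3} = ({}::nat set)"
  by auto

lemma bsign_table: "bsign {1} {1} = -1" "bsign {1} {2} = 1" "bsign {1} {3} = 1" "bsign {2} {1} = -1" "bsign {2} {2} = -1" "bsign {2} {3} = 1" "bsign {3} {1} = -1" "bsign {3} {2} = -1" "bsign {3} {3} = -1"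
  by (simp_all add: bsign_single)

lemma para_mul:
  assumes a: "paravector a" and b: "paravector b"
  shows "mmul a b C = (if C = {} then a {} * b {} - a {1} * b {1} - a {2} * b {2} - a {3} * b {3}
    else if C = {1} then a {} * b {1} + a {1} * b {}
    else if C = {2} then a {} * b {2} + a {2} * b {}
    else if C = {3} then a {} * b {3} + a {3} * b {}
    else if C = {1,2} then a {1} * b {2} - a {2} * b {1}
    else if C = {1,3} then a {1} * b {3} - a {3} * b {1}
    else if C = {2,3} then a {2} * b {3} - a {3} * b {2}
    else 0)"
proof -
  have S: "mmul a b C = (\<Sum>A\<in>QQ. \<Sum>B\<in>QQ. if sym_diff A B = C then bsign A B * a A * b B else 0)"
  proof -
    have i: "\<And>A. (\<Sum>B\<in>PP. if sym_diff A B = C then bsign A B * a A * b B else 0)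
       = (\<Sum>B\<in>QQ. if sym_diff A B = C then bsign A B * a A * b B else 0)"
      apply (rule sum_PP_QQ)
      subgoal for A' B' using para_zero[OF b, of B'] by (simp cong: if_cong)
      done
    have o: "(\<Sum>A\<in>PP. \<Sum>B\<in>QQ. if sym_diff A B = C then bsign A B * a A * b B else 0)
       = (\<Sum>A\<in>QQ. \<Sum>B\<in>QQ. if sym_diff A B = C then bsign A B * a A * b B else 0)"
      apply (rule sum_PP_QQ)
      subgoal for A' using para_zero[OF a, of A'] by (simp cong: if_cong)
      done
    show ?thesis unfolding mmul_PP i o ..
  qed
  show ?thesis
  proof (cases "C \<in> {{},{1},{2},{3},{1,2},{1,3},{2,3}}")
    case True
    then consider "C = {}" | "C = {1}" | "C = {2}" | "C = {3}" | "C = {1,2}" | "C = {1,3}" | "C = {2,3}"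
      by blast
    then show ?thesis unfolding S sum_QQ
      by cases (simp only: sd_table bsign_table set_neqs if_True if_False simp_thms; simp add: algebra_simps)+
  next
    case False
    then have ne: "{} \<noteq> C" "{1} \<noteq> C" "{2} \<noteq> C" "{3} \<noteq> C" "{1,2} \<noteq> C" "{1,3} \<noteq> C" "{2,3} \<noteq> C"
      "C \<noteq> {}" "C \<noteq> {1}" "C \<noteq> {2}" "C \<noteq> {3}" "C \<noteq> {1,2}" "C \<noteq> {1,3}" "C \<noteq> {2,3}"
      by auto
    show ?thesis unfolding S sum_QQ
      by (simp only: sd_table ne if_True if_False simp_thms; simp)
  qed
qed

lemma pinv_para: "paravector y \<Longrightarrow> paravector (pinv y)"
  unfolding paravector_def pinv_def pconj_def by auto

lemma pnormsq_nonneg: "pnormsq y \<ge> 0" by (simp add: pnormsq_def)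

lemma pinv_mul_aux:
  assumes "pnormsq y \<noteq> 0"
  shows "y {} * (y {} / pnormsq y) + y {1} * (y {1} / pnormsq y) + y {2} * (y {2} / pnormsq y) + y {3} * (y {3} / pnormsq y) = 1"
proof -
  have "y {} * (y {} / pnormsq y) + y {1} * (y {1} / pnormsq y) + y {2} * (y {2} / pnormsq y) + y {3} * (y {3} / pnormsq y)
     = (y {} * y {} + y {1} * y {1} + y {2} * y {2} + y {3} * y {3}) / pnormsq y"
    by (simp add: add_divide_distrib)
  also have "y {} * y {} + y {1} * y {1} + y {2} * y {2} + y {3} * y {3} = pnormsq y"
    by (simp add: pnormsq_def power2_eq_square)
  finally show ?thesis using assms by simp
qed

lemma pinv_right: assumes "paravector y" "pnormsq y \<noteq> 0" shows "mmul y (pinv y) = mone"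
proof
  fix C
  show "mmul y (pinv y) C = mone C"
  proof (cases "C = {}")
    case True
    then show ?thesis using pinv_mul_aux[OF assms(2)] by (subst para_mul[OF assms(1) pinv_para[OF assms(1)]]) (simp add: pinv_def pconj_def mone_apply)
  next
    case False
    then show ?thesis using assms(2) by (subst para_mul[OF assms(1) pinv_para[OF assms(1)]]) (simp add: pinv_def pconj_def mone_apply field_simps)
  qed
qed

lemma pinv_left: assumes "paravector y" "pnormsq y \<noteq> 0" shows "mmul (pinv y) y = mone"
proof
  fix C
  show "mmul (pinv y) y C = mone C"
  proof (cases "C = {}")
    case True
    then show ?thesis using pinv_mul_aux[OF assms(2)] by (subst para_mul[OF pinv_para[OF assms(1)] assms(1)]) (simp add: pinv_def pconj_def mone_apply)
  next
    case False
    then show ?thesis using assms(2) by (subst para_mul[OF pinv_para[OF assms(1)] assms(1)]) (simp add: pinv_def pconj_def mone_apply field_simps)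
  qed
qed

definition rv :: "mv \<Rightarrow> mv" where "rv a = (\<lambda>C. rsign C * a C)"

lemma binv_single: "binv {i} {i} = 0"
proof -
  have "{(i', j'). i' \<in> {i} \<and> j' \<in> {i} \<and> j' < i'} = {}" by auto
  then show ?thesis unfolding binv_def by (metis card.empty)
qed

lemma binv_pair: "i < j \<Longrightarrow> binv {i,j} {i,j} = 1"
proof -
  assume "i < j"
  then have "{(i', j'). i' \<in> {i,j} \<and> j' \<in> {i,j} \<and> j' < i'} = {(j,i)}" by auto
  then show ?thesis by (simp add: binv_def)
qed

lemma binv_triple: "binv {1,2,3} {1,2,3} = 3"
proof -
  have "{(i', j'). i' \<in> {1,2,3::nat} \<and> j' \<in> {1,2,3} \<and> j' < i'} = {(2,1),(3,1),(3,2)}" by auto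
  then show ?thesis by (simp add: binv_def)
qed

lemma rsign_QQ: "C \<in> QQ \<Longrightarrow> rsign C = 1"
  using binv_single[of 1] binv_single[of 2] binv_single[of 3]
  by (auto simp: QQ_def rsign_def binv_def)

lemma rsign_other: "C \<in> PP \<Longrightarrow> C \<notin> QQ \<Longrightarrow> rsign C = -1"
proof -
  assume "C \<in> PP" "C \<notin> QQ"
  then have "C = {1,2} \<or> C = {1,3} \<or> C = {2,3} \<or> C = {1,2,3}"
    unfolding PP_def QQ_def Pow3 by auto
  then show ?thesis
    using binv_pair[of 1 2] binv_pair[of 1 3] binv_pair[of 2 3] binv_triple
    by (auto simp: rsign_def)
qed

lemma rv_mmul: "rv (mmul a b) = mmul (rv b) (rv a)"
proof
  fix C
  have "rv (mmul a b) C = (\<Sum>A\<in>PP. \<Sum>B\<in>PP. if sym_diff A B = C then rsign (sym_diff A B) * bsign A B * a A * b B else 0)"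
    unfolding rv_def mmul_PP sum_distrib_left by (intro sum.cong refl) (simp add: mult_ac)
  also have "\<dots> = (\<Sum>A\<in>PP. \<Sum>B\<in>PP. if sym_diff B A = C then bsign B A * (rsign B * b B) * (rsign A * a A) else 0)"
  proof (intro sum.cong refl)
    fix A B assume "A \<in> PP" "B \<in> PP"
    then have r: "rsign (sym_diff A B) * bsign A B = bsign B A * rsign A * rsign B"
      using rev_sign finite_PP_el by blast
    have sd: "sym_diff B A = sym_diff A B" by auto
    have eq: "rsign (sym_diff A B) * bsign A B * a A * b B = bsign B A * (rsign B * b B) * (rsign A * a A)"
      using r by (simp add: mult_ac)
    show "(if sym_diff A B = C then rsign (sym_diff A B) * bsign A B * a A * b B else 0) =
      (if sym_diff B A = C then bsign B A * (rsign B * b B) * (rsign A * a A) else 0)"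
      unfolding sd by (simp only: eq)
  qed
  also have "\<dots> = mmul (rv b) (rv a) C"
    unfolding mmul_PP rv_def by (rule sum.swap)
  finally show "rv (mmul a b) C = mmul (rv b) (rv a) C" .
qed

lemma rv_para: assumes a: "paravector a" shows "rv a = a"
proof
  fix C
  show "rv a C = a C"
    using rsign_QQ[of C] para_zero[OF a, of C] by (cases "C \<in> QQ") (auto simp: rv_def)
qed

lemma rv_supp: "supp a \<Longrightarrow> supp (rv a)"
  by (simp add: supp_def rv_def)

lemma para_of_rv: assumes "supp a" "rv a = a" shows "paravector a"
  unfolding paravector_def
proof (intro allI impI)
  fix C :: "nat set" assume C: "C \<notin> {{}, {1}, {2}, {3}}"
  show "a C = 0"
  proof (cases "C \<in> PP")
    case True
    then have "rsign C = -1" using rsign_other C by (simp add: QQ_def)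
    moreover have "rsign C * a C = a C" using assms(2) unfolding rv_def by metis
    ultimately show ?thesis by simp
  next
    case False then show ?thesis using assms(1) by (simp add: supp_def)
  qed
qed

lemma mpow_supp: "supp (mpow a n)"
  by (cases n) (simp_all add: mone_supp mmul_supp)

lemma pow_comm: "supp a \<Longrightarrow> mmul a (mpow a n) = mmul (mpow a n) a"
proof (induction n)
  case 0 then show ?case by (simp add: mmul_one_left mmul_one_right)
next
  case (Suc n)
  then show ?case by (simp add: mmul_assoc[symmetric])
qed

lemma rv_mone: "rv mone = mone"
  by (rule rv_para) (simp add: paravector_def mone_def)

lemma rv_mpow: "supp a \<Longrightarrow> rv (mpow a n) = mpow (rv a) n"
proof (induction n)
  case 0 then show ?case by (simp add: rv_mone)
next
  case (Suc n)
  then show ?case by (simp add: rv_mmul pow_comm[OF rv_supp[OF Suc.prems]])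
qed

lemma palin_comm: assumes "supp u" "supp x"
  shows "mmul u (mpow (mmul x u) n) = mmul (mpow (mmul u x) n) u"
proof (induction n)
  case 0 then show ?case using assms by (simp add: mmul_one_left mmul_one_right)
next
  case (Suc n)
  have "mmul u (mpow (mmul x u) (Suc n)) = mmul (mmul u (mpow (mmul x u) n)) (mmul x u)"
    by (simp add: mmul_assoc)
  also have "\<dots> = mmul (mpow (mmul u x) (Suc n)) u"
    unfolding Suc by (simp add: mmul_assoc)
  finally show ?case .
qed

lemma palindrome: assumes "paravector u" "paravector x"
  shows "paravector (mmul (mpow (mmul u x) n) u)"
proof (rule para_of_rv)
  show "supp (mmul (mpow (mmul u x) n) u)" by (rule mmul_supp)
  have "rv (mmul (mpow (mmul u x) n) u) = mmul u (mpow (mmul x u) n)"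
    by (simp add: rv_mmul rv_mpow[OF mmul_supp] rv_para[OF assms(1)] rv_para[OF assms(2)])
  also have "\<dots> = mmul (mpow (mmul u x) n) u"
    by (rule palin_comm[OF para_supp[OF assms(1)] para_supp[OF assms(2)]])
  finally show "rv (mmul (mpow (mmul u x) n) u) = mmul (mpow (mmul u x) n) u" .
qed

definition n1 :: "mv \<Rightarrow> real" where "n1 a = (\<Sum>A\<in>PP. \<bar>a A\<bar>)"

lemma n1_nonneg: "n1 a \<ge> 0" by (simp add: n1_def sum_nonneg)

lemma abs_bsign: "\<bar>bsign A B\<bar> = 1" by (simp add: bsign_def)

lemma n1_mmul: "n1 (mmul a b) \<le> n1 a * n1 b"
proof -
  have "n1 (mmul a b) \<le> (\<Sum>C\<in>PP. \<Sum>A\<in>PP. \<Sum>B\<in>PP. if sym_diff A B = C then \<bar>a A\<bar> * \<bar>b B\<bar> else 0)"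
    unfolding n1_def mmul_PP
  proof (rule sum_mono)
    fix C assume "C \<in> PP"
    have "\<bar>\<Sum>A\<in>PP. \<Sum>B\<in>PP. if sym_diff A B = C then bsign A B * a A * b B else 0\<bar>
      \<le> (\<Sum>A\<in>PP. \<bar>\<Sum>B\<in>PP. if sym_diff A B = C then bsign A B * a A * b B else 0\<bar>)"
      by (rule sum_abs)
    also have "\<dots> \<le> (\<Sum>A\<in>PP. \<Sum>B\<in>PP. \<bar>if sym_diff A B = C then bsign A B * a A * b B else 0\<bar>)"
      by (intro sum_mono sum_abs)
    also have "\<dots> = (\<Sum>A\<in>PP. \<Sum>B\<in>PP. if sym_diff A B = C then \<bar>a A\<bar> * \<bar>b B\<bar> else 0)"
      by (intro sum.cong refl) (simp add: abs_mult abs_bsign)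
    finally show "\<bar>\<Sum>A\<in>PP. \<Sum>B\<in>PP. if sym_diff A B = C then bsign A B * a A * b B else 0\<bar>
      \<le> (\<Sum>A\<in>PP. \<Sum>B\<in>PP. if sym_diff A B = C then \<bar>a A\<bar> * \<bar>b B\<bar> else 0)" .
  qed
  also have "\<dots> = (\<Sum>A\<in>PP. \<Sum>B\<in>PP. \<Sum>C\<in>PP. if sym_diff A B = C then \<bar>a A\<bar> * \<bar>b B\<bar> else 0)"
    by (subst sum.swap) (rule sum.cong[OF refl], rule sum.swap)
  also have "\<dots> = (\<Sum>A\<in>PP. \<Sum>B\<in>PP. \<bar>a A\<bar> * \<bar>b B\<bar>)"
    by (intro sum.cong[OF refl]) (simp add: sum.delta' sd_PP)
  also have "\<dots> = n1 a * n1 b"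
    by (simp add: n1_def sum_product)
  finally show ?thesis .
qed

lemma n1_mone: "n1 mone = 1"
  unfolding n1_def mone_apply by (simp add: sum.delta empty_PP if_distrib cong: if_cong)

lemma n1_mpow: "n1 (mpow a n) \<le> n1 a ^ n"
proof (induction n)
  case 0 then show ?case by (simp add: n1_mone)
next
  case (Suc n)
  have "n1 (mpow a (Suc n)) \<le> n1 (mpow a n) * n1 a" by (simp add: n1_mmul)
  also have "\<dots> \<le> n1 a ^ n * n1 a" by (rule mult_right_mono[OF Suc n1_nonneg])
  finally show ?case by (simp add: mult.commute)
qed

lemma n1_mneg: "n1 (mneg a) = n1 a" by (simp add: n1_def mneg_def)

lemma abs_le_n1: "C \<in> PP \<Longrightarrow> \<bar>a C\<bar> \<le> n1 a"
  unfolding n1_def by (rule member_le_sum) auto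

lemma n1_para: "paravector y \<Longrightarrow> n1 y = \<bar>y {}\<bar> + \<bar>y {1}\<bar> + \<bar>y {2}\<bar> + \<bar>y {3}\<bar>"
  unfolding n1_def by (subst sum_PP_QQ) (simp_all add: para_zero sum_QQ)

lemma four_sq: "((A::real) + B + C + D)^2 \<le> 4 * (A^2 + B^2 + C^2 + D^2)"
proof -
  have "4 * (A^2 + B^2 + C^2 + D^2) - (A + B + C + D)^2 =
     (A-B)^2 + (A-C)^2 + (A-D)^2 + (B-C)^2 + (B-D)^2 + (C-D)^2"
    by (simp add: power2_eq_square algebra_simps)
  moreover have "0 \<le> (A-B)^2 + (A-C)^2 + (A-D)^2 + (B-C)^2 + (B-D)^2 + (C-D)^2" by simp
  ultimately show ?thesis by linarith
qed

definition pa :: "mv \<Rightarrow> real" where "pa y = sqrt (pnormsq y)"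

lemma pa_nonneg: "pa y \<ge> 0" by (simp add: pa_def pnormsq_nonneg)

lemma pa_sq: "pa y ^ 2 = pnormsq y" by (simp add: pa_def pnormsq_nonneg)

lemma n1_para_le: assumes "paravector y" shows "n1 y \<le> 2 * pa y"
proof -
  have "n1 y ^ 2 \<le> 4 * pnormsq y"
    using four_sq[of "\<bar>y {}\<bar>" "\<bar>y {1}\<bar>" "\<bar>y {2}\<bar>" "\<bar>y {3}\<bar>"]
    by (simp add: n1_para[OF assms] pnormsq_def)
  then have "n1 y \<le> sqrt (4 * pnormsq y)" by (rule real_le_rsqrt)
  also have "\<dots> = 2 * pa y" by (simp add: pa_def real_sqrt_mult)
  finally show ?thesis .
qed

lemma n1_pinv: assumes "paravector y" "pnormsq y \<noteq> 0" shows "n1 (pinv y) \<le> 2 / pa y"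
proof -
  have p: "pnormsq y > 0" using assms(2) pnormsq_nonneg[of y] by linarith
  have "n1 (pinv y) = n1 y / pnormsq y"
    unfolding n1_para[OF pinv_para[OF assms(1)]] n1_para[OF assms(1)]
    using p by (simp add: pinv_def pconj_def abs_div add_divide_distrib)
  also have "\<dots> \<le> 2 * pa y / pnormsq y"
    by (rule divide_right_mono[OF n1_para_le[OF assms(1)]]) (use p in simp)
  also have "\<dots> = 2 / pa y"
    using p unfolding pa_sq[symmetric] by (simp add: power2_eq_square)
  finally show ?thesis .
qed

definition v4 :: "mv \<Rightarrow> real \<times> real \<times> real \<times> real" where
  "v4 y = (y {}, y {1}, y {2}, y {3})"

lemma norm_v4: "norm (v4 y) = pa y"
  by (simp add: v4_def norm_Pair pa_def pnormsq_def add.assoc)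

lemma v4_msub: "v4 (msub x y) = v4 x - v4 y"
  by (simp add: v4_def msub_def)

lemma pa_msub_ge: "pa (msub y x) \<ge> pa y - pa x"
  using norm_triangle_ineq2[of "v4 y" "v4 x"] by (simp add: norm_v4[symmetric] v4_msub)

definition ZT :: "nat \<Rightarrow> mv \<Rightarrow> mv \<Rightarrow> mv" where
  "ZT N y x = (\<lambda>C. pinv (msub x y) C +
      (\<Sum>\<mu><N. mmul (mpow (mmul (pinv y) x) \<mu>) (pinv y) C))"

lemma zterm_ZT: "zterm N w x p = ZT N (w p) x"
  by (simp add: zterm_def ZT_def)

lemma supp_sum: "(\<And>i. supp (f i)) \<Longrightarrow> supp (\<lambda>C. \<Sum>i\<in>I. f i C)"
  by (simp add: supp_def)

lemma msub_para: "paravector x \<Longrightarrow> paravector y \<Longrightarrow> paravector (msub x y)"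
  by (simp add: paravector_def msub_def)

lemma mneg_para: "paravector x \<Longrightarrow> paravector (mneg x)"
  by (simp add: paravector_def mneg_def)

lemma pinv_msub_swap: "pinv (msub x y) = mneg (pinv (msub y x))"
proof
  fix A
  have h: "pnormsq (msub x y) = pnormsq (msub y x)" by (simp add: pnormsq_def msub_def power2_commute)
  have c: "pconj (msub x y) A = - pconj (msub y x) A" by (simp add: pconj_def msub_def)
  show "pinv (msub x y) A = mneg (pinv (msub y x)) A" unfolding pinv_def mneg_def h c by simp
qed

lemma pinv_mneg: "pinv (mneg y) = mneg (pinv y)"
  by (rule ext) (simp add: pinv_def pconj_def mneg_def pnormsq_def)

lemma ZT_identity:
  assumes x: "paravector x" and y: "paravector y" and ny: "pnormsq y \<noteq> 0"
    and nd: "pnormsq (msub y x) \<noteq> 0"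
  shows "ZT N y x = mneg (mmul (pinv (msub y x)) (mmul y (mmul (mpow (mmul (pinv y) x) N) (pinv y))))"
proof -
  define u where "u = pinv y"
  define a where "a = mmul u x"
  define d where "d = msub y x"
  define v where "v = pinv d"
  define S where "S = (\<lambda>n. (\<lambda>C. \<Sum>\<mu><n. mmul (mpow a \<mu>) u C))"
  have u: "paravector u" unfolding u_def by (rule pinv_para[OF y])
  have su: "supp u" by (rule para_supp[OF u])
  have sx: "supp x" by (rule para_supp[OF x])
  have sa: "supp a" unfolding a_def by (rule mmul_supp)
  have yu: "mmul y u = mone" unfolding u_def by (rule pinv_right[OF y ny])
  have uy: "mmul u y = mone" unfolding u_def by (rule pinv_left[OF y ny])
  have dpar: "paravector d" unfolding d_def by (rule msub_para[OF y x])
  have vd: "mmul v d = mone" unfolding v_def by (rule pinv_left[OF dpar nd[folded d_def]])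
  have ya: "mmul y a = x"
    unfolding a_def by (simp add: mmul_assoc[symmetric] yu mmul_one_left[OF sx])
  have key: "mmul d (S n) = msub mone (mmul y (mmul (mpow a n) u))" for n
  proof (induction n)
    case 0
    have "S 0 = mzero" by (simp add: S_def mzero_def)
    then show ?case
      by (simp add: mmul_zero_right mmul_one_left[OF su] yu) (simp add: mzero_def msub_def)
  next
    case (Suc n)
    have S1: "S (Suc n) = madd (S n) (mmul (mpow a n) u)"
      by (simp add: S_def madd_def)
    have dz: "mmul d (mmul (mpow a n) u) = msub (mmul y (mmul (mpow a n) u)) (mmul x (mmul (mpow a n) u))"
      unfolding d_def by (rule mmul_sub_left)
    have xz: "mmul y (mmul (mpow a (Suc n)) u) = mmul x (mmul (mpow a n) u)"
    proof -
      have "mmul y (mmul (mpow a (Suc n)) u) = mmul y (mmul (mmul a (mpow a n)) u)"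
        by (simp add: pow_comm[OF sa])
      also have "\<dots> = mmul (mmul y a) (mmul (mpow a n) u)"
        by (simp add: mmul_assoc)
      finally show ?thesis by (simp add: ya)
    qed
    show ?case
      unfolding S1 mmul_add_right Suc dz xz
      by (rule ext) (simp add: madd_def msub_def)
  qed
  have sS: "supp (S N)" unfolding S_def by (rule supp_sum) (rule mmul_supp)
  have "S N = mmul v (mmul d (S N))"
    by (simp add: mmul_assoc[symmetric] vd mmul_one_left[OF sS])
  also have "\<dots> = msub v (mmul v (mmul y (mmul (mpow a N) u)))"
    unfolding key mmul_sub_right mmul_one_right[OF para_supp[OF pinv_para[OF dpar]], folded v_def] ..
  finally have SN: "S N = msub v (mmul v (mmul y (mmul (mpow a N) u)))" .
  have "ZT N y x = (\<lambda>C. mneg v C + S N C)"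
    unfolding ZT_def S_def a_def u_def v_def d_def pinv_msub_swap[of x y] ..
  also have "\<dots> = mneg (mmul v (mmul y (mmul (mpow a N) u)))"
    unfolding SN by (rule ext) (simp add: mneg_def msub_def)
  finally show ?thesis unfolding v_def d_def a_def u_def .
qed

lemma pa_pos: "pnormsq y \<noteq> 0 \<Longrightarrow> pa y > 0"
  using pnormsq_nonneg[of y] by (simp add: pa_def)

lemma ZT_bound:
  assumes x: "paravector x" and y: "paravector y" and ny: "pnormsq y \<noteq> 0"
    and big: "pa y \<ge> 2 * pa x"
  shows "\<bar>ZT N y x C\<bar> \<le> 16 * (4 * pa x) ^ N / pa y ^ (N + 1)"
proof -
  define u where "u = pinv y"
  define a where "a = mmul u x"
  define d where "d = msub y x"
  have py: "pa y > 0" by (rule pa_pos[OF ny])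
  have px: "pa x \<ge> 0" by (rule pa_nonneg)
  have pd: "pa d \<ge> pa y / 2" using pa_msub_ge[of y x] big unfolding d_def by linarith
  then have pd0: "pa d > 0" using py by linarith
  then have nd: "pnormsq d \<noteq> 0" by (auto simp: pa_def)
  have dpar: "paravector d" unfolding d_def by (rule msub_para[OF y x])
  define M where "M = mmul (pinv d) (mmul y (mmul (mpow a N) u))"
  have Z: "ZT N y x = mneg M"
    unfolding M_def a_def u_def d_def by (rule ZT_identity[OF x y ny nd[unfolded d_def]])
  have b1: "n1 (pinv d) \<le> 4 / pa y"
  proof -
    have "n1 (pinv d) \<le> 2 / pa d" by (rule n1_pinv[OF dpar nd])
    also have "\<dots> \<le> 2 / (pa y / 2)"
      by (rule divide_left_mono[OF pd]) (use py pd0 in auto)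
    finally show ?thesis by simp
  qed
  have b2: "n1 y \<le> 2 * pa y" by (rule n1_para_le[OF y])
  have b4: "n1 u \<le> 2 / pa y" unfolding u_def by (rule n1_pinv[OF y ny])
  have ba: "n1 a \<le> 4 * pa x / pa y"
  proof -
    have "n1 a \<le> n1 u * n1 x" unfolding a_def by (rule n1_mmul)
    also have "\<dots> \<le> (2 / pa y) * (2 * pa x)"
      by (rule mult_mono[OF b4 n1_para_le[OF x]]) (use py in \<open>auto simp: n1_nonneg\<close>)
    finally show ?thesis by simp
  qed
  have b3: "n1 (mpow a N) \<le> (4 * pa x / pa y) ^ N"
    using n1_mpow[of a N] power_mono[OF ba n1_nonneg, of N] by linarith
  have "n1 M \<le> n1 (pinv d) * (n1 y * (n1 (mpow a N) * n1 u))"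
  proof -
    have "n1 M \<le> n1 (pinv d) * n1 (mmul y (mmul (mpow a N) u))" unfolding M_def by (rule n1_mmul)
    also have "\<dots> \<le> n1 (pinv d) * (n1 y * n1 (mmul (mpow a N) u))"
      by (rule mult_left_mono[OF n1_mmul n1_nonneg])
    also have "\<dots> \<le> n1 (pinv d) * (n1 y * (n1 (mpow a N) * n1 u))"
      by (intro mult_left_mono[OF _ n1_nonneg] n1_mmul)
    finally show ?thesis .
  qed
  also have "\<dots> \<le> (4 / pa y) * ((2 * pa y) * ((4 * pa x / pa y) ^ N * (2 / pa y)))"
    using py px
    by (intro mult_mono b1 b2 b3 b4 mult_nonneg_nonneg n1_nonneg zero_le_power divide_nonneg_nonneg) auto
  also have "\<dots> = 16 * (4 * pa x) ^ N / pa y ^ (N + 1)"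
    using py by (simp add: power_divide field_simps)
  finally have nM: "n1 M \<le> 16 * (4 * pa x) ^ N / pa y ^ (N + 1)" .
  have "\<bar>M C\<bar> \<le> n1 M"
  proof (cases "C \<in> PP")
    case True then show ?thesis by (rule abs_le_n1)
  next
    case False then show ?thesis unfolding M_def by (simp add: mmul_outside n1_nonneg)
  qed
  then show ?thesis using nM unfolding Z by (simp add: mneg_def)
qed

lemma ZT_para: assumes x: "paravector x" and y: "paravector y"
  shows "paravector (ZT N y x)"
proof -
  have p1: "paravector (pinv (msub x y))" by (rule pinv_para[OF msub_para[OF x y]])
  have p2: "paravector (mmul (mpow (mmul (pinv y) x) \<mu>) (pinv y))" for \<mu>
    by (rule palindrome[OF pinv_para[OF y] x])
  show ?thesis
    using p1 p2 unfolding paravector_def ZT_def by simp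
qed

lemma mneg_mneg: "mneg (mneg a) = a" by (simp add: mneg_def)

lemma ZT_odd: "ZT N (mneg y) (mneg x) = mneg (ZT N y x)"
proof -
  have m: "msub (mneg x) (mneg y) = mneg (msub x y)" by (rule ext) (simp add: msub_def mneg_def)
  have a: "mmul (mneg (pinv y)) (mneg x) = mmul (pinv y) x"
    by (simp add: mmul_neg_left mmul_neg_right mneg_mneg)
  show ?thesis
    unfolding ZT_def m pinv_mneg
    unfolding a
    unfolding mmul_neg_right
    by (rule ext) (simp add: mneg_def sum_negf)
qed

definition comb :: "nat \<Rightarrow> (nat \<Rightarrow> mv) \<Rightarrow> (nat \<Rightarrow> int) \<Rightarrow> mv" where
  "comb N \<omega> k = (\<lambda>C. \<Sum>\<alpha>\<in>{1..N}. 2 * of_int (k \<alpha>) * \<omega> \<alpha> C)"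

lemma lattice_comb: "y \<in> lattice N \<omega> \<longleftrightarrow> (\<exists>k. y = comb N \<omega> k)"
  by (simp add: lattice_def comb_def)

type_synonym r4 = "real \<times> real \<times> real \<times> real"

definition cc :: "nat \<Rightarrow> r4 \<Rightarrow> real" where
  "cc \<alpha> c = (if \<alpha> = 1 then fst c else if \<alpha> = 2 then fst (snd c) else if \<alpha> = 3 then fst (snd (snd c))
     else if \<alpha> = 4 then snd (snd (snd c)) else 0)"

lemma cc_add: "cc \<alpha> (a + b) = cc \<alpha> a + cc \<alpha> b" by (simp add: cc_def)
lemma cc_scale: "cc \<alpha> (r *\<^sub>R a) = r * cc \<alpha> a" by (simp add: cc_def)

lemma abs_cc_le: "\<bar>cc \<alpha> c\<bar> \<le> norm c"
proof -
  obtain c1 c2 c3 c4 where c: "c = (c1, c2, c3, c4)" by (cases c) auto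
  have n1: "\<bar>c1\<bar> \<le> norm c" using norm_fst_le[where x=c1 and y="(c2,c3,c4)"] c by (simp del: norm_Pair)
  have n2: "\<bar>c2\<bar> \<le> norm c" using norm_fst_le[where x=c2 and y="(c3,c4)"] norm_snd_le[where x=c1 and y="(c2,c3,c4)"] c by (simp del: norm_Pair)
  have n3: "\<bar>c3\<bar> \<le> norm c" using norm_fst_le[where x=c3 and y=c4] norm_snd_le[where x=c2 and y="(c3,c4)"] norm_snd_le[where x=c1 and y="(c2,c3,c4)"] c by (simp del: norm_Pair)
  have n4: "\<bar>c4\<bar> \<le> norm c" using norm_snd_le[where x=c3 and y=c4] norm_snd_le[where x=c2 and y="(c3,c4)"] norm_snd_le[where x=c1 and y="(c2,c3,c4)"] c by (simp del: norm_Pair)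
  show ?thesis using n1 n2 n3 n4 c by (simp add: cc_def del: norm_Pair)
qed

definition Tm :: "nat \<Rightarrow> (nat \<Rightarrow> mv) \<Rightarrow> r4 \<Rightarrow> r4 \<times> r4" where
  "Tm N \<omega> c = (v4 (\<lambda>C. \<Sum>\<alpha>\<in>{1..N}. cc \<alpha> c * \<omega> \<alpha> C),
     (if N < 1 then cc 1 c else 0, if N < 2 then cc 2 c else 0, if N < 3 then cc 3 c else 0, if N < 4 then cc 4 c else 0))"

lemma linear_Tm: "linear (Tm N \<omega>)"
proof (rule linearI)
  fix a b :: r4
  show "Tm N \<omega> (a + b) = Tm N \<omega> a + Tm N \<omega> b"
    by (simp add: Tm_def v4_def cc_add distrib_right sum.distrib)
next
  fix r and a :: r4
  show "Tm N \<omega> (r *\<^sub>R a) = r *\<^sub>R Tm N \<omega> a"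
    by (simp add: Tm_def v4_def cc_scale sum_distrib_left mult.assoc)
qed

lemma Tm_inj:
  assumes N: "N \<in> {1..4}"
    and par: "\<forall>\<alpha>\<in>{1..N}. paravector (\<omega> \<alpha>)"
    and li: "\<forall>c :: nat \<Rightarrow> real. (\<forall>C. (\<Sum>\<alpha>\<in>{1..N}. c \<alpha> * \<omega> \<alpha> C) = 0) \<longrightarrow> (\<forall>\<alpha>\<in>{1..N}. c \<alpha> = 0)"
    and T0: "Tm N \<omega> c = 0"
  shows "c = 0"
proof -
  define F where "F = (\<lambda>C. \<Sum>\<alpha>\<in>{1..N}. cc \<alpha> c * \<omega> \<alpha> C)"
  have Fpar: "paravector F"
    using par unfolding F_def paravector_def by simp
  have v: "v4 F = 0" using T0 unfolding Tm_def F_def by (simp add: prod_eq_iff)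
  have F0: "F C = 0" for C
  proof (cases "C \<in> QQ")
    case True
    then show ?thesis using v by (auto simp: QQ_def v4_def prod_eq_iff)
  next
    case False
    then show ?thesis using para_zero[OF Fpar] by simp
  qed
  have low: "cc \<alpha> c = 0" if "\<alpha> \<in> {1..N}" for \<alpha>
    using li[rule_format, of "\<lambda>\<alpha>. cc \<alpha> c"] F0 that unfolding F_def by blast
  have h: "N < 1 \<Longrightarrow> cc 1 c = 0" "N < 2 \<Longrightarrow> cc 2 c = 0" "N < 3 \<Longrightarrow> cc 3 c = 0" "N < 4 \<Longrightarrow> cc 4 c = 0"
    using T0 unfolding Tm_def by (simp_all add: prod_eq_iff)
  have high: "cc \<alpha> c = 0" if "\<alpha> \<in> {1..4}" "\<not> \<alpha> \<le> N" for \<alpha>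
  proof -
    have "\<alpha> = 1 \<or> \<alpha> = 2 \<or> \<alpha> = 3 \<or> \<alpha> = 4" using that(1) by auto
    then show ?thesis using h that(2) by auto
  qed
  have all: "cc \<alpha> c = 0" if "\<alpha> \<in> {1..4}" for \<alpha>
    using low high that by (cases "\<alpha> \<le> N") auto
  show ?thesis
    using all[of 1] all[of 2] all[of 3] all[of 4] by (simp add: cc_def prod_eq_iff)
qed

lemma lattice_lower:
  assumes N: "N \<in> {1..4}"
    and par: "\<forall>\<alpha>\<in>{1..N}. paravector (\<omega> \<alpha>)"
    and li: "\<forall>c :: nat \<Rightarrow> real. (\<forall>C. (\<Sum>\<alpha>\<in>{1..N}. c \<alpha> * \<omega> \<alpha> C) = 0) \<longrightarrow> (\<forall>\<alpha>\<in>{1..N}. c \<alpha> = 0)"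
  shows "\<exists>e>0. \<forall>k \<alpha>. \<alpha> \<in> {1..N} \<longrightarrow> e * \<bar>of_int (k \<alpha>)\<bar> \<le> pa (comb N \<omega> k)"
proof -
  obtain e where e: "e > 0" "\<forall>c\<in>UNIV. e * norm c \<le> norm (Tm N \<omega> c)"
    using injective_imp_isometric[of UNIV "Tm N \<omega>"] linear_Tm[of N \<omega>] Tm_inj[OF N par li]
    unfolding linear_conv_bounded_linear by auto
  have "2 * e * \<bar>of_int (k \<alpha>)\<bar> \<le> pa (comb N \<omega> k)" if \<alpha>: "\<alpha> \<in> {1..N}" for k \<alpha>
  proof -
    define f where "f = (\<lambda>\<beta>. if \<beta> \<le> N then 2 * (of_int (k \<beta>) :: real) else 0)"
    define c :: r4 where "c = (f 1, f 2, f 3, f 4)"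
    have ccf: "cc \<beta> c = f \<beta>" if "\<beta> \<in> {1..4}" for \<beta>
    proof -
      have "\<beta> = 1 \<or> \<beta> = 2 \<or> \<beta> = 3 \<or> \<beta> = 4" using that by auto
      then show ?thesis by (auto simp: cc_def c_def)
    qed
    have Tc: "Tm N \<omega> c = (v4 (comb N \<omega> k), 0)"
    proof -
      have "(\<lambda>C. \<Sum>\<beta>\<in>{1..N}. cc \<beta> c * \<omega> \<beta> C) = comb N \<omega> k"
        unfolding comb_def
      proof (intro ext sum.cong refl)
        fix C \<beta> assume "\<beta> \<in> {1..N}"
        then show "cc \<beta> c * \<omega> \<beta> C = 2 * of_int (k \<beta>) * \<omega> \<beta> C"
          using N ccf[of \<beta>] by (simp add: f_def)
      qed
      moreover have "cc \<beta> c = 0" if "\<beta> \<in> {1..4}" "N < \<beta>" for \<beta>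
        using ccf[OF that(1)] that by (simp add: f_def)
      ultimately show ?thesis unfolding Tm_def by (simp add: prod_eq_iff)
    qed
    have "2 * \<bar>of_int (k \<alpha>)\<bar> = \<bar>cc \<alpha> c\<bar>"
      using ccf[of \<alpha>] \<alpha> N by (simp add: f_def)
    also have "\<dots> \<le> norm c" by (rule abs_cc_le)
    finally have "e * (2 * \<bar>of_int (k \<alpha>)\<bar>) \<le> e * norm c"
      using e(1) by simp
    also have "\<dots> \<le> norm (Tm N \<omega> c)" using e(2) by blast
    also have "\<dots> = pa (comb N \<omega> k)" unfolding Tc by (simp add: norm_v4)
    finally show ?thesis by (simp add: mult_ac)
  qed
  then show ?thesis using e(1) by (intro exI[of _ "2 * e"]) auto
qed

definition gg :: "real \<Rightarrow> int \<Rightarrow> real" where "gg s j = (1 + \<bar>real_of_int j\<bar>) powr (- s)"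

lemma gg_nonneg: "gg s j \<ge> 0" by (simp add: gg_def)

lemma gg_sum_bound:
  assumes s: "s > 1"
  shows "\<exists>B. \<forall>M. (\<Sum>j\<in>{-M..M}. gg s j) \<le> B"
proof -
  define h where "h = (\<lambda>m::nat. (1 + real m) powr (- s))"
  have sh0: "summable (\<lambda>m::nat. real m powr (- s))"
    using s by (subst summable_real_powr_iff) simp
  have sh: "summable h"
    using sh0 unfolding h_def summable_Suc_iff[symmetric, of "\<lambda>m. real m powr (- s)"]
    by (simp add: add.commute)
  have h0: "h m \<ge> 0" for m by (simp add: h_def)
  have "(\<Sum>j\<in>{-M..M}. gg s j) \<le> 2 * suminf h" for M
  proof -
    have sub: "{-M..M} \<subseteq> int ` {..nat M} \<union> (\<lambda>m. - int m) ` {..nat M}"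
    proof
      fix j assume "j \<in> {-M..M}"
      then show "j \<in> int ` {..nat M} \<union> (\<lambda>m. - int m) ` {..nat M}"
      proof (cases "j \<ge> 0")
        case True
        then have "j = int (nat j)" "nat j \<in> {..nat M}" using \<open>j \<in> {-M..M}\<close> by auto
        then show ?thesis by blast
      next
        case False
        then have "j = - int (nat (-j))" "nat (-j) \<in> {..nat M}" using \<open>j \<in> {-M..M}\<close> by auto
        then show ?thesis by blast
      qed
    qed
    have "(\<Sum>j\<in>{-M..M}. gg s j) \<le> (\<Sum>j\<in>int ` {..nat M} \<union> (\<lambda>m. - int m) ` {..nat M}. gg s j)"
      by (rule sum_mono2[OF _ sub]) (auto simp: gg_nonneg)
    also have "\<dots> \<le> (\<Sum>j\<in>int ` {..nat M}. gg s j) + (\<Sum>j\<in>(\<lambda>m. - int m) ` {..nat M}. gg s j)"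
      by (subst sum_Un) (auto intro: sum_nonneg simp: gg_nonneg)
    also have "\<dots> = (\<Sum>m\<le>nat M. h m) + (\<Sum>m\<le>nat M. h m)"
      by (subst sum.reindex, simp add: inj_on_def, subst sum.reindex, simp add: inj_on_def)
         (simp add: gg_def h_def)
    also have "\<dots> \<le> suminf h + suminf h"
      by (intro add_mono sum_le_suminf[OF sh]) (auto simp: h0)
    finally show ?thesis by simp
  qed
  then show ?thesis by blast
qed

lemma comb_para: "\<forall>\<alpha>\<in>{1..N}. paravector (\<omega> \<alpha>) \<Longrightarrow> paravector (comb N \<omega> k)"
  unfolding paravector_def comb_def by simp

lemma comb_cong: "(\<forall>\<alpha>\<in>{1..N}. k \<alpha> = k' \<alpha>) \<Longrightarrow> comb N \<omega> k = comb N \<omega> k'"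
  unfolding comb_def by (intro ext sum.cong) auto

lemma comb_zero: "comb N \<omega> (\<lambda>_. 0) = mzero"
  by (simp add: comb_def mzero_def)

lemma comb_neg: "comb N \<omega> (\<lambda>\<alpha>. - k \<alpha>) = mneg (comb N \<omega> k)"
  by (simp add: comb_def mneg_def sum_negf)

lemma comb_inj:
  assumes li: "\<forall>c :: nat \<Rightarrow> real. (\<forall>C. (\<Sum>\<alpha>\<in>{1..N}. c \<alpha> * \<omega> \<alpha> C) = 0) \<longrightarrow> (\<forall>\<alpha>\<in>{1..N}. c \<alpha> = 0)"
    and eq: "comb N \<omega> k = comb N \<omega> k'"
  shows "\<forall>\<alpha>\<in>{1..N}. k \<alpha> = k' \<alpha>"
proof -
  have "\<forall>C. (\<Sum>\<alpha>\<in>{1..N}. (2 * of_int (k \<alpha> - k' \<alpha>)) * \<omega> \<alpha> C) = 0"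
  proof
    fix C
    have "(\<Sum>\<alpha>\<in>{1..N}. (2 * of_int (k \<alpha> - k' \<alpha>)) * \<omega> \<alpha> C)
       = (\<Sum>\<alpha>\<in>{1..N}. 2 * of_int (k \<alpha>) * \<omega> \<alpha> C - 2 * of_int (k' \<alpha>) * \<omega> \<alpha> C)"
      by (rule sum.cong) (simp_all add: left_diff_distrib right_diff_distrib)
    also have "\<dots> = comb N \<omega> k C - comb N \<omega> k' C"
      unfolding comb_def by (rule sum_subtractf)
    also have "\<dots> = 0" using eq by simp
    finally show "(\<Sum>\<alpha>\<in>{1..N}. (2 * of_int (k \<alpha> - k' \<alpha>)) * \<omega> \<alpha> C) = 0" .
  qed
  then have "\<forall>\<alpha>\<in>{1..N}. 2 * real_of_int (k \<alpha> - k' \<alpha>) = 0"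
    using li[rule_format, of "\<lambda>\<alpha>. 2 * of_int (k \<alpha> - k' \<alpha>)"] by blast
  then show ?thesis by simp
qed

lemma para_nonzero: "paravector y \<Longrightarrow> y \<noteq> mzero \<Longrightarrow> pnormsq y \<noteq> 0"
proof -
  assume p: "paravector y" and nz: "y \<noteq> mzero"
  then obtain C where C: "y C \<noteq> 0" by (auto simp: mzero_def)
  then have "C \<in> QQ" using para_zero[OF p] by blast
  then have "y {} \<noteq> 0 \<or> y {1} \<noteq> 0 \<or> y {2} \<noteq> 0 \<or> y {3} \<noteq> 0" using C by (auto simp: QQ_def)
  moreover have "y {} ^ 2 \<le> pnormsq y" "y {1} ^ 2 \<le> pnormsq y" "y {2} ^ 2 \<le> pnormsq y" "y {3} ^ 2 \<le> pnormsq y"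
    unfolding pnormsq_def by simp_all
  ultimately show ?thesis by (metis not_less power2_less_eq_zero_iff)
qed

locale latt =
  fixes N :: nat and \<omega> :: "nat \<Rightarrow> mv" and W :: "nat \<Rightarrow> mv"
  assumes N: "N \<in> {1..4}"
    and par: "\<forall>\<alpha>\<in>{1..N}. paravector (\<omega> \<alpha>)"
    and li: "\<forall>c :: nat \<Rightarrow> real. (\<forall>C. (\<Sum>\<alpha>\<in>{1..N}. c \<alpha> * \<omega> \<alpha> C) = 0) \<longrightarrow> (\<forall>\<alpha>\<in>{1..N}. c \<alpha> = 0)"
    and bij: "bij_betw W UNIV (lattice N \<omega> - {mzero})"
begin

definition kk :: "nat \<Rightarrow> nat \<Rightarrow> int" where "kk p = (SOME k. W p = comb N \<omega> k)"

definition ka :: "nat \<Rightarrow> nat \<Rightarrow> int" where "ka p = restrict (kk p) {1..N}"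

lemma W_in: "W p \<in> lattice N \<omega>" "W p \<noteq> mzero"
  using bij by (auto simp: bij_betw_def)

lemma W_comb: "W p = comb N \<omega> (kk p)"
proof -
  have "\<exists>k. W p = comb N \<omega> k" using W_in(1) by (simp add: lattice_comb)
  then show ?thesis unfolding kk_def by (rule someI_ex)
qed

lemma W_para: "paravector (W p)"
proof -
  have e: "paravector (W p) = paravector (comb N \<omega> (kk p))" by (rule arg_cong[where f=paravector, OF W_comb])
  show ?thesis using comb_para[OF par, of "kk p"] unfolding e .
qed

lemma W_pn: "pnormsq (W p) \<noteq> 0"
  by (rule para_nonzero[OF W_para W_in(2)])

lemma ka_inj: "inj ka"
proof (rule injI)
  fix p q assume "ka p = ka q"
  then have "\<forall>\<alpha>\<in>{1..N}. kk p \<alpha> = kk q \<alpha>" unfolding ka_def by (metis restrict_apply)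
  then have "comb N \<omega> (kk p) = comb N \<omega> (kk q)" by (rule comb_cong)
  then have "W p = W q" using W_comb[of p] W_comb[of q] by argo
  then show "p = q" using bij by (auto simp: bij_betw_def inj_def)
qed

lemma e_ex: "\<exists>e>0. \<forall>k \<alpha>. \<alpha> \<in> {1..N} \<longrightarrow> e * \<bar>of_int (k \<alpha>)\<bar> \<le> pa (comb N \<omega> k)"
  by (rule lattice_lower[OF N par li])

definition ee :: real where "ee = (SOME e. e > 0 \<and> (\<forall>k \<alpha>. \<alpha> \<in> {1..N} \<longrightarrow> e * \<bar>of_int (k \<alpha>)\<bar> \<le> pa (comb N \<omega> k)))"

lemma ee: "ee > 0" "\<alpha> \<in> {1..N} \<Longrightarrow> ee * \<bar>of_int (k \<alpha>)\<bar> \<le> pa (comb N \<omega> k)"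
  using someI_ex[OF e_ex] unfolding ee_def by blast+

lemma W_lower: assumes "\<alpha> \<in> {1..N}" shows "ee * \<bar>of_int (kk p \<alpha>)\<bar> \<le> pa (W p)"
proof -
  have e: "pa (W p) = pa (comb N \<omega> (kk p))" by (rule arg_cong[where f=pa, OF W_comb])
  show ?thesis using ee(2)[OF assms, of "kk p"] unfolding e .
qed

lemma W_ge_ee: "pa (W p) \<ge> ee"
proof -
  have "\<exists>\<alpha>\<in>{1..N}. kk p \<alpha> \<noteq> 0"
  proof (rule ccontr)
    assume "\<not> ?thesis"
    then have "comb N \<omega> (kk p) = comb N \<omega> (\<lambda>_. 0)" by (intro comb_cong) auto
    then show False using W_in(2)[of p] comb_zero[of N \<omega>] W_comb[of p] by argo
  qed
  then obtain \<alpha> where \<alpha>: "\<alpha> \<in> {1..N}" "kk p \<alpha> \<noteq> 0" by blast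
  then have "\<bar>kk p \<alpha>\<bar> \<ge> 1" by linarith
  then have "\<bar>real_of_int (kk p \<alpha>)\<bar> \<ge> 1" by (metis of_int_1_le_iff of_int_abs)
  then have "ee * 1 \<le> ee * \<bar>real_of_int (kk p \<alpha>)\<bar>" using ee(1) by (intro mult_left_mono) auto
  then have "ee \<le> ee * \<bar>real_of_int (kk p \<alpha>)\<bar>" by simp
  then show ?thesis using W_lower[OF \<alpha>(1), of p] by (rule order_trans)
qed

lemma finite_small: "finite {p. pa (W p) < R}"
proof -
  define M where "M = \<lceil>R / ee\<rceil>"
  have sub: "ka ` {p. pa (W p) < R} \<subseteq> PiE {1..N} (\<lambda>_. {-M..M})"
  proof
    fix z assume "z \<in> ka ` {p. pa (W p) < R}"
    then obtain p where p: "pa (W p) < R" "z = ka p" by blast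
    have "kk p \<alpha> \<in> {-M..M}" if "\<alpha> \<in> {1..N}" for \<alpha>
    proof -
      have "ee * \<bar>of_int (kk p \<alpha>)\<bar> < R" using W_lower[OF that, of p] p(1) by linarith
      then have "\<bar>of_int (kk p \<alpha>)\<bar> < R / ee" using ee(1) by (simp add: field_simps)
      then have "\<bar>kk p \<alpha>\<bar> \<le> M" unfolding M_def by linarith
      then show ?thesis by auto
    qed
    then show "z \<in> PiE {1..N} (\<lambda>_. {-M..M})" unfolding p(2) ka_def by auto
  qed
  have fin: "finite (PiE {1..N} (\<lambda>_. {-M..M}))" by (rule finite_PiE) auto
  show ?thesis using inj_on_finite[OF inj_on_subset[OF ka_inj subset_UNIV] sub fin] .
qed

end

context latt
begin

definition ss :: real where "ss = real (N + 1) / real N"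

lemma N1: "N \<ge> 1" using N by auto

lemma ss_gt: "ss > 1" using N1 by (simp add: ss_def)

lemma ss_N: "real N * ss = real (N + 1)" using N1 by (simp add: ss_def)

definition GG :: "(nat \<Rightarrow> int) \<Rightarrow> real" where "GG z = (\<Prod>\<alpha>\<in>{1..N}. gg ss (z \<alpha>))"

lemma GG_nonneg: "GG z \<ge> 0" by (simp add: GG_def gg_nonneg prod_nonneg)

lemma term_bound: "1 / pa (W p) ^ (N + 1) \<le> (2 / ee) ^ (N + 1) * GG (ka p)"
proof -
  define P where "P = pa (W p)"
  have Pe: "P \<ge> ee" unfolding P_def by (rule W_ge_ee)
  have e0: "ee > 0" by (rule ee(1))
  have P0: "P > 0" using Pe e0 by linarith
  define Q where "Q = 2 * P / ee"
  have Q0: "Q > 0" using P0 e0 by (simp add: Q_def)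
  have le: "Q powr (- ss) \<le> gg ss (kk p \<alpha>)" if \<alpha>: "\<alpha> \<in> {1..N}" for \<alpha>
  proof -
    have "ee * \<bar>of_int (kk p \<alpha>)\<bar> \<le> P" unfolding P_def by (rule W_lower[OF \<alpha>])
    then have "\<bar>of_int (kk p \<alpha>)\<bar> \<le> P / ee" using e0 by (simp add: field_simps)
    moreover have "1 \<le> P / ee" using Pe e0 by (simp add: field_simps)
    ultimately have "1 + \<bar>of_int (kk p \<alpha>)\<bar> \<le> Q" unfolding Q_def by simp
    then show ?thesis unfolding gg_def
      by (intro powr_mono2') (use ss_gt in auto)
  qed
  have "(Q powr (- ss)) ^ N \<le> GG (ka p)"
  proof -
    have "(Q powr (- ss)) ^ N = (\<Prod>\<alpha>\<in>{1..N}. Q powr (- ss))" by simp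
    also have "\<dots> \<le> (\<Prod>\<alpha>\<in>{1..N}. gg ss (kk p \<alpha>))"
      by (intro prod_mono) (simp add: le)
    also have "\<dots> = GG (ka p)" unfolding GG_def ka_def by (intro prod.cong) auto
    finally show ?thesis .
  qed
  moreover have "(Q powr (- ss)) ^ N = 1 / Q ^ (N + 1)"
  proof -
    have "(Q powr (- ss)) ^ N = Q powr (real N * (- ss))" using Q0 by (simp add: powr_power)
    also have "\<dots> = Q powr (- real (N + 1))" using ss_N by simp
    also have "\<dots> = inverse (Q powr real (N + 1))" by (rule powr_minus)
    also have "\<dots> = 1 / Q ^ (N + 1)" by (subst powr_realpow[OF Q0]) (simp add: divide_inverse)
    finally show ?thesis .
  qed
  ultimately have "1 / Q ^ (N + 1) \<le> GG (ka p)" by simp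
  then have "(2 / ee) ^ (N + 1) * (1 / Q ^ (N + 1)) \<le> (2 / ee) ^ (N + 1) * GG (ka p)"
    using e0 by (intro mult_left_mono) auto
  moreover have "(2 / ee) ^ (N + 1) * (1 / Q ^ (N + 1)) = 1 / P ^ (N + 1)"
    unfolding Q_def using e0 P0 by (simp add: power_divide power_mult_distrib field_simps)
  ultimately show ?thesis unfolding P_def by simp
qed

lemma summable_W: "summable (\<lambda>p. 1 / pa (W p) ^ (N + 1))"
proof -
  obtain B where B: "\<And>M. (\<Sum>j\<in>{-M..M}. gg ss j) \<le> B" using gg_sum_bound[OF ss_gt] by blast
  have B0: "B \<ge> 0" using B[of 0] gg_nonneg[of ss 0] by simp
  show ?thesis
  proof (rule summableI_nonneg_bounded)
    fix n
    show "0 \<le> 1 / pa (W n) ^ (N + 1)" by (simp add: pa_nonneg)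
    define M where "M = (\<Sum>p<n. \<Sum>\<alpha>\<in>{1..N}. \<bar>kk p \<alpha>\<bar>)"
    have sub: "ka ` {..<n} \<subseteq> PiE {1..N} (\<lambda>_. {-M..M})"
    proof
      fix z assume "z \<in> ka ` {..<n}"
      then obtain q where q: "q < n" "z = ka q" by blast
      have "kk q \<alpha> \<in> {-M..M}" if "\<alpha> \<in> {1..N}" for \<alpha>
      proof -
        have "\<bar>kk q \<alpha>\<bar> \<le> (\<Sum>\<alpha>'\<in>{1..N}. \<bar>kk q \<alpha>'\<bar>)"
          by (rule member_le_sum) (use that in auto)
        also have "\<dots> \<le> M" unfolding M_def
          by (rule member_le_sum[where f="\<lambda>p. \<Sum>\<alpha>\<in>{1..N}. \<bar>kk p \<alpha>\<bar>"]) (use q in \<open>auto intro: sum_nonneg\<close>)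
        finally show ?thesis by (simp add: abs_le_iff)
      qed
      then show "z \<in> PiE {1..N} (\<lambda>_. {-M..M})" unfolding q(2) ka_def by auto
    qed
    have "(\<Sum>p<n. 1 / pa (W p) ^ (N + 1)) \<le> (\<Sum>p<n. (2 / ee) ^ (N + 1) * GG (ka p))"
      by (intro sum_mono term_bound)
    also have "\<dots> = (2 / ee) ^ (N + 1) * (\<Sum>z\<in>ka ` {..<n}. GG z)"
      by (simp add: sum_distrib_left sum.reindex inj_on_subset[OF ka_inj])
    also have "\<dots> \<le> (2 / ee) ^ (N + 1) * (\<Sum>z\<in>PiE {1..N} (\<lambda>_. {-M..M}). GG z)"
      by (intro mult_left_mono sum_mono2 finite_PiE sub) (auto simp: GG_nonneg ee(1) less_imp_le)
    also have "\<dots> = (2 / ee) ^ (N + 1) * (\<Prod>\<alpha>\<in>{1..N}. \<Sum>j\<in>{-M..M}. gg ss j)"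
      unfolding GG_def by (subst prod_sum_PiE) auto
    also have "\<dots> \<le> (2 / ee) ^ (N + 1) * (\<Prod>\<alpha>\<in>{1..N}. B)"
      using ee(1) by (intro mult_left_mono prod_mono conjI sum_nonneg B) (auto simp: gg_nonneg)
    finally show "(\<Sum>p<n. 1 / pa (W p) ^ (N + 1)) \<le> (2 / ee) ^ (N + 1) * (\<Prod>\<alpha>\<in>{1..N}. B)" .
  qed
qed

end

lemma reindex_suminf:
  fixes f :: "nat \<Rightarrow> real"
  assumes s: "summable (\<lambda>p. \<bar>f p\<bar>)" and b: "bij \<sigma>"
  shows "summable (\<lambda>p. f (\<sigma> p))" "suminf (\<lambda>p. f (\<sigma> p)) = suminf f"
proof -
  have sf: "summable f" using s by (rule summable_rabs_cancel)
  have "(f has_sum suminf f) UNIV"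
    using norm_summable_imp_has_sum[of f "suminf f"] s summable_sums[OF sf] by simp
  then have "((\<lambda>p. f (\<sigma> p)) has_sum suminf f) UNIV"
    using has_sum_reindex_bij_betw[OF b] by blast
  then have "(\<lambda>p. f (\<sigma> p)) sums suminf f" by (rule has_sum_imp_sums)
  then show "summable (\<lambda>p. f (\<sigma> p))" "suminf (\<lambda>p. f (\<sigma> p)) = suminf f"
    by (auto simp: sums_iff)
qed

lemma invol_bij: "(\<And>p. \<sigma> (\<sigma> p) = p) \<Longrightarrow> bij \<sigma>"
  by (metis bijI injI surjI)

context latt
begin

lemma ZT_summable:
  assumes x: "paravector x"
  shows "summable (\<lambda>p. \<bar>ZT N (W p) x C\<bar>)"
proof (rule summable_comparison_test_ev)
  show "summable (\<lambda>p. 16 * (4 * pa x) ^ N * (1 / pa (W p) ^ (N + 1)))"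
    by (rule summable_mult[OF summable_W])
  have "finite {p. pa (W p) < 2 * pa x}" by (rule finite_small)
  then have "eventually (\<lambda>p. \<not> pa (W p) < 2 * pa x) cofinite"
    by (simp add: eventually_cofinite)
  then have ev: "eventually (\<lambda>p. pa (W p) \<ge> 2 * pa x) sequentially"
    by (simp add: cofinite_eq_sequentially not_less)
  show "eventually (\<lambda>p. norm \<bar>ZT N (W p) x C\<bar> \<le> 16 * (4 * pa x) ^ N * (1 / pa (W p) ^ (N + 1))) sequentially"
    using ev
  proof (rule eventually_mono)
    fix p assume "pa (W p) \<ge> 2 * pa x"
    then show "norm \<bar>ZT N (W p) x C\<bar> \<le> 16 * (4 * pa x) ^ N * (1 / pa (W p) ^ (N + 1))"
      using ZT_bound[OF x W_para W_pn] by simp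
  qed
qed

end

lemma bij_Suc: "bij_betw Suc UNIV {1..}"
  by (rule bij_betw_imageI) (auto simp: image_iff dest!: Suc_le_D)

theorem mainTheorem6:
  fixes N :: nat and \<omega> :: "nat \<Rightarrow> mv" and w :: "nat \<Rightarrow> mv"
  assumes "N \<in> {1..4}"
    and "\<forall>\<alpha>\<in>{1..N}. paravector (\<omega> \<alpha>)"
    and "\<forall>c :: nat \<Rightarrow> real. (\<forall>C. (\<Sum>\<alpha>\<in>{1..N}. c \<alpha> * \<omega> \<alpha> C) = 0)
           \<longrightarrow> (\<forall>\<alpha>\<in>{1..N}. c \<alpha> = 0)"
    and "bij_betw w {1..} (lattice N \<omega> - {mzero})"
  shows "\<forall>x. paravector x \<and> x \<notin> lattice N \<omega> \<longrightarrow>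
           (\<forall>C. summable (\<lambda>p. zterm N w x (Suc p) C))
         \<and> paravector (zeta N w x)
         \<and> zeta N w (mneg x) = mneg (zeta N w x)"
proof (intro allI impI)
  fix x assume hx: "paravector x \<and> x \<notin> lattice N \<omega>"
  define W where "W = (\<lambda>p. w (Suc p))"
  have bijW: "bij_betw W UNIV (lattice N \<omega> - {mzero})"
    using bij_betw_trans[OF bij_Suc assms(4)] unfolding W_def comp_def by simp
  interpret latt N \<omega> W using assms(1,2,3) bijW by unfold_locales
  have x: "paravector x" and xL: "x \<notin> lattice N \<omega>" using hx by auto
  have zt: "zterm N w z (Suc p) = ZT N (W p) z" for z p by (simp add: zterm_ZT W_def)
  have zeta_eq: "zeta N w z = (\<lambda>C. pinv z C + (\<Sum>p. ZT N (W p) z C))" for z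
    by (simp add: zeta_def zt)
  have S: "summable (\<lambda>p. ZT N (W p) x C)" for C
    using ZT_summable[OF x] by (rule summable_rabs_cancel)
  have P: "paravector (zeta N w x)"
    unfolding zeta_eq paravector_def
  proof (intro allI impI)
    fix A :: "nat set" assume A: "A \<notin> {{}, {1}, {2}, {3}}"
    have "pinv x A = 0" using pinv_para[OF x] A by (simp add: paravector_def)
    moreover have "ZT N (W p) x A = 0" for p using ZT_para[OF x W_para, of N p] A by (simp add: paravector_def)
    ultimately show "pinv x A + (\<Sum>p. ZT N (W p) x A) = 0" by simp
  qed
  define \<sigma> where "\<sigma> = (\<lambda>p. inv_into UNIV W (mneg (W p)))"
  have negL: "mneg (W p) \<in> lattice N \<omega> - {mzero}" for p
  proof -
    have "W p = comb N \<omega> (kk p)" by (rule W_comb)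
    then have "mneg (W p) = comb N \<omega> (\<lambda>\<alpha>. - kk p \<alpha>)" by (simp add: comb_neg)
    moreover have "mneg (W p) \<noteq> mzero" using W_in(2)[of p] by (auto simp: mneg_def mzero_def fun_eq_iff)
    ultimately show ?thesis by (auto simp: lattice_comb)
  qed
  have Wsig: "W (\<sigma> p) = mneg (W p)" for p
    unfolding \<sigma>_def by (rule bij_betw_inv_into_right[OF bijW negL])
  have invol: "\<sigma> (\<sigma> p) = p" for p
  proof -
    have "W (\<sigma> (\<sigma> p)) = W p" by (simp add: Wsig mneg_mneg)
    then show ?thesis using bijW by (auto simp: bij_betw_def inj_def)
  qed
  have bs: "bij \<sigma>" by (rule invol_bij[OF invol])
  have odd: "ZT N (W p) (mneg x) = mneg (ZT N (W (\<sigma> p)) x)" for p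
  proof -
    have "ZT N (W p) (mneg x) = ZT N (mneg (W (\<sigma> p))) (mneg x)" by (simp add: Wsig mneg_mneg)
    also have "\<dots> = mneg (ZT N (W (\<sigma> p)) x)" by (rule ZT_odd)
    finally show ?thesis .
  qed
  have O: "zeta N w (mneg x) = mneg (zeta N w x)"
  proof
    fix C
    have "(\<Sum>p. ZT N (W p) (mneg x) C) = (\<Sum>p. - ZT N (W (\<sigma> p)) x C)"
      by (simp only: odd) (simp add: mneg_def)
    also have "\<dots> = - (\<Sum>p. ZT N (W (\<sigma> p)) x C)"
      by (rule suminf_minus[OF reindex_suminf(1)[OF ZT_summable[OF x] bs]])
    also have "(\<Sum>p. ZT N (W (\<sigma> p)) x C) = (\<Sum>p. ZT N (W p) x C)"
      by (rule reindex_suminf(2)[OF ZT_summable[OF x] bs])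
    finally have "(\<Sum>p. ZT N (W p) (mneg x) C) = - (\<Sum>p. ZT N (W p) x C)" .
    then show "zeta N w (mneg x) C = mneg (zeta N w x) C"
      unfolding zeta_eq pinv_mneg by (simp add: mneg_def)
  qed
  show "(\<forall>C. summable (\<lambda>p. zterm N w x (Suc p) C)) \<and> paravector (zeta N w x) \<and> zeta N w (mneg x) = mneg (zeta N w x)"
    using S P O by (simp add: zt)
qed

end
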